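(* Let $\mathcal{Y}$ be a $\mathbb{Z}[X_1^{\pm1},\dots,X_n^{\pm1}]$-module and $\mathcal{G}=\{(y_1,a_1),\dots,(y_K,a_K)\}\subseteq\mathcal{Y}\rtimes\mathbb{Z}^n$. The semigroup $\langle\mathcal{G}\rangle$ is a group if and only if there exists a full-image Eulerian $\mathcal{G}$-graph that represents the neutral element $(0,0)$.
   Context: $\mathcal{Y}\rtimes\mathbb{Z}^n$ is the group of pairs $(y,a)$ with $(y,a)(y',a')=(y+X^a y',a+a')$, $X^a=X_1^{a_1}\cdots X_n^{a_n}$. A $\mathcal{G}$-graph is a finite directed multigraph $\Gamma$ whose vertex set is a finite subset of $\mathbb{Z}^n$, each vertex incident to at least one edge, each edge $e$ carries a label $\ell(e)\in\{1,\dots,K\}$, and an edge with label $i$ from $s(e)$ to $d(e)$ satisfies $d(e)=s(e)+a_i$. $\Gamma$ represents the element $\left(\sum_{e\in E(\Gamma)}X^{s(e)}\cdot y_{\ell(e)},\ \sum_{e\in E(\Gamma)}a_{\ell(e)}\right)$. $\Gamma$ is full-image if every label $1,\dots,K$ occurs on some edge, and Eulerian if it has an Euler circuit (equivalently, it is connected and every vertex has equal in- and out-degree). *)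

theory Defs
  imports "HOL-Analysis.Finite_Cartesian_Product" "HOL-Library.Multiset" "HOL-Algebra.Group"
begin

text \<open>A Z[X_1^{+-1},...,X_n^{+-1}]-module structure on an abelian group 'y is given by the
  action of the monomials: act a y = X^a * y for a in Z^n (here int ^ 'n).  The axioms say
  that this is an action of the group Z^n by additive maps, which is exactly a module over
  the group ring Z[Z^n] = Z[X_1^{+-1},...,X_n^{+-1}].\<close>
definition laurent_module :: "(int ^ 'n \<Rightarrow> 'y::ab_group_add \<Rightarrow> 'y) \<Rightarrow> bool" where
  "laurent_module act \<longleftrightarrow>
     (\<forall>y. act 0 y = y) \<and>
     (\<forall>a b y. act (a + b) y = act a (act b y)) \<and>
     (\<forall>a u v. act a (u + v) = act a u + act a v)"

definition sdp_mult :: "(int ^ 'n \<Rightarrow> 'y::ab_group_add \<Rightarrow> 'y) \<Rightarrow>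
    ('y \<times> (int ^ 'n)) \<Rightarrow> ('y \<times> (int ^ 'n)) \<Rightarrow> ('y \<times> (int ^ 'n))" where
  "sdp_mult act g h = (fst g + act (snd g) (fst h), snd g + snd h)"

inductive_set gen_semigroup :: "(int ^ 'n \<Rightarrow> 'y::ab_group_add \<Rightarrow> 'y) \<Rightarrow>
    ('y \<times> (int ^ 'n)) set \<Rightarrow> ('y \<times> (int ^ 'n)) set"
  for act G where
    gen: "g \<in> G \<Longrightarrow> g \<in> gen_semigroup act G"
  | mult: "g \<in> gen_semigroup act G \<Longrightarrow> h \<in> gen_semigroup act G \<Longrightarrow>
             sdp_mult act g h \<in> gen_semigroup act G"

text \<open>A G-graph (G = {(y_1,a_1),...,(y_K,a_K)}) is a finite directed multigraph whose edges
  are given as a list of pairs (s(e), l(e)) of source vertex in Z^n and label; the target of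
  an edge is d(e) = s(e) + a_{l(e)}.  The vertex set is the set of endpoints of edges (each
  vertex is incident to at least one edge).\<close>
definition is_G_graph :: "nat \<Rightarrow> ((int ^ 'n) \<times> nat) list \<Rightarrow> bool" where
  "is_G_graph K E \<longleftrightarrow> (\<forall>e \<in> set E. snd e \<in> {1..K})"

definition edge_dest :: "(nat \<Rightarrow> int ^ 'n) \<Rightarrow> ((int ^ 'n) \<times> nat) \<Rightarrow> int ^ 'n" where
  "edge_dest a e = fst e + a (snd e)"

definition graph_elem :: "(int ^ 'n \<Rightarrow> 'y::ab_group_add \<Rightarrow> 'y) \<Rightarrow> (nat \<Rightarrow> 'y) \<Rightarrow>
    (nat \<Rightarrow> int ^ 'n) \<Rightarrow> ((int ^ 'n) \<times> nat) list \<Rightarrow> 'y \<times> (int ^ 'n)" where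
  "graph_elem act y a E =
     ((\<Sum>e\<leftarrow>E. act (fst e) (y (snd e))), (\<Sum>e\<leftarrow>E. a (snd e)))"

definition full_image :: "nat \<Rightarrow> ((int ^ 'n) \<times> nat) list \<Rightarrow> bool" where
  "full_image K E \<longleftrightarrow> (\<forall>i \<in> {1..K}. \<exists>e \<in> set E. snd e = i)"

definition eulerian :: "(nat \<Rightarrow> int ^ 'n) \<Rightarrow> ((int ^ 'n) \<times> nat) list \<Rightarrow> bool" where
  "eulerian a E \<longleftrightarrow> E \<noteq> [] \<and>
     (\<exists>c. mset c = mset E \<and>
          (\<forall>j < length c. edge_dest a (c ! j) = fst (c ! ((j + 1) mod length c))))"

end

theory Submission
  imports Defs
begin

lemma lm_zero: "laurent_module act \<Longrightarrow> act 0 x = x"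
  unfolding laurent_module_def by blast
lemma lm_add: "laurent_module act \<Longrightarrow> act (p + q) x = act p (act q x)"
  unfolding laurent_module_def by blast
lemma lm_hom: "laurent_module act \<Longrightarrow> act p (u + v) = act p u + act p v"
  unfolding laurent_module_def by blast
lemma lm_act0: "laurent_module act \<Longrightarrow> act p 0 = 0"
proof -
  assume m: "laurent_module act"
  have "act p (0 + 0) = act p 0 + act p 0" using lm_hom[OF m] by blast
  then show ?thesis by simp
qed
lemma lm_inv: "laurent_module act \<Longrightarrow> act (-p) (act p x) = x"
  by (metis lm_add lm_zero add.left_inverse)
lemma lm_inj: "laurent_module act \<Longrightarrow> act p x = 0 \<Longrightarrow> x = 0"
  by (metis lm_inv lm_act0)

lemma sdp_assoc: "laurent_module act \<Longrightarrow>
  sdp_mult act (sdp_mult act x y) z = sdp_mult act x (sdp_mult act y z)"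
  unfolding sdp_mult_def by (simp add: lm_add lm_hom add.assoc)

lemma sdp_one_l: "laurent_module act \<Longrightarrow> sdp_mult act (0,0) x = x"
  unfolding sdp_mult_def by (simp add: lm_zero)
lemma sdp_one_r: "laurent_module act \<Longrightarrow> sdp_mult act x (0,0) = x"
  unfolding sdp_mult_def by (simp add: lm_act0)

lemma sdp_comm_inv:
  assumes m: "laurent_module act" and h: "sdp_mult act x z = (0,0)"
  shows "sdp_mult act z x = (0,0)"
proof -
  have s: "snd z + snd x = 0" and f: "fst x + act (snd x) (fst z) = 0"
    using h unfolding sdp_mult_def by (auto simp: add.commute)
  have "act (snd z) (fst x + act (snd x) (fst z)) = 0" using f lm_act0[OF m] by simp
  hence "act (snd z) (fst x) + act (snd z + snd x) (fst z) = 0"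
    by (simp add: lm_hom[OF m] lm_add[OF m])
  hence "act (snd z) (fst x) + fst z = 0" using s lm_zero[OF m] by simp
  thus ?thesis using s unfolding sdp_mult_def by (simp add: add.commute)
qed

lemma sdp_idem:
  assumes m: "laurent_module act" and h: "sdp_mult act e e = e"
  shows "e = (0,0)"
proof -
  have s: "snd e + snd e = snd e" using h unfolding sdp_mult_def
    by (metis snd_conv)
  hence s0: "snd e = 0" by simp
  have "fst e + act (snd e) (fst e) = fst e" using h unfolding sdp_mult_def
    by (metis fst_conv)
  hence "fst e = 0" using s0 lm_zero[OF m] by simp
  thus ?thesis using s0 by (simp add: prod_eq_iff)
qed

fun wprod :: "(int ^ 'n \<Rightarrow> 'y::ab_group_add \<Rightarrow> 'y) \<Rightarrow> (nat \<Rightarrow> 'y) \<Rightarrow> (nat \<Rightarrow> int ^ 'n)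
   \<Rightarrow> nat list \<Rightarrow> 'y \<times> (int ^ 'n)" where
  "wprod act y a [] = (0,0)"
| "wprod act y a (i#js) = sdp_mult act (y i, a i) (wprod act y a js)"

lemma wprod_append: "laurent_module act \<Longrightarrow>
  wprod act y a (xs @ ys) = sdp_mult act (wprod act y a xs) (wprod act y a ys)"
  by (induction xs) (simp_all add: sdp_one_l sdp_assoc)

lemma wprod_single: "laurent_module act \<Longrightarrow> wprod act y a [i] = (y i, a i)"
  by (simp add: sdp_one_r)

lemma wprod_snd: "snd (wprod act y a ws) = sum_list (map a ws)"
  by (induction ws) (simp_all add: sdp_mult_def)

lemma wprod_concat: "laurent_module act \<Longrightarrow> \<forall>l \<in> set L. wprod act y a l = (0,0) \<Longrightarrow>
   wprod act y a (concat L) = (0,0)"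
  by (induction L) (simp_all add: wprod_append sdp_one_l)

lemma gen_to_word:
  assumes m: "laurent_module act"
  shows "x \<in> gen_semigroup act {(y i, a i) | i. i \<in> {1..K}} \<Longrightarrow>
    \<exists>ws. ws \<noteq> [] \<and> set ws \<subseteq> {1..K} \<and> x = wprod act y a ws"
proof (induction rule: gen_semigroup.induct)
  case (gen g)
  then obtain i where "i \<in> {1..K}" "g = (y i, a i)" by blast
  then show ?case using wprod_single[OF m] by (intro exI[of _ "[i]"]) auto
next
  case (mult g h)
  then obtain u v where "u \<noteq> []" "set u \<subseteq> {1..K}" "g = wprod act y a u"
     "v \<noteq> []" "set v \<subseteq> {1..K}" "h = wprod act y a v" by blast
  then show ?case using wprod_append[OF m] by (intro exI[of _ "u @ v"]) auto
qed

lemma word_to_gen: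
  assumes m: "laurent_module act"
  shows "ws \<noteq> [] \<Longrightarrow> set ws \<subseteq> {1..K} \<Longrightarrow>
    wprod act y a ws \<in> gen_semigroup act {(y i, a i) | i. i \<in> {1..K}}"
proof (induction ws)
  case Nil then show ?case by simp
next
  case (Cons i js)
  have g: "(y i, a i) \<in> gen_semigroup act {(y i, a i) | i. i \<in> {1..K}}"
    using Cons.prems by (intro gen_semigroup.gen) auto
  show ?case
  proof (cases "js = []")
    case True
    then show ?thesis using g wprod_single[OF m] by simp
  next
    case False
    then show ?thesis using Cons g by (auto intro: gen_semigroup.mult)
  qed
qed

fun edges :: "(nat \<Rightarrow> int ^ 'n) \<Rightarrow> int ^ 'n \<Rightarrow> nat list \<Rightarrow> ((int ^ 'n) \<times> nat) list" where
  "edges a p [] = []"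
| "edges a p (i#js) = (p, i) # edges a (p + a i) js"

lemma edges_nth: "edges a p ws =
   map (\<lambda>j. (p + sum_list (map a (take j ws)), ws ! j)) [0..<length ws]"
proof (induction ws arbitrary: p)
  case Nil then show ?case by simp
next
  case (Cons i js)
  show ?case by (simp add: Cons map_upt_Suc del: upt_Suc add: add.assoc)
qed

lemma edges_snd: "map snd (edges a p ws) = ws"
  by (induction ws arbitrary: p) auto

lemma graph_elem_edges:
  assumes m: "laurent_module act"
  shows "graph_elem act y a (edges a p ws) = (act p (fst (wprod act y a ws)), snd (wprod act y a ws))"
proof (induction ws arbitrary: p)
  case Nil then show ?case by (simp add: graph_elem_def lm_act0[OF m])
next
  case (Cons i js)
  from Cons[of "p + a i"] show ?case
    by (simp add: graph_elem_def sdp_mult_def lm_hom[OF m] lm_add[OF m])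
qed

lemma circuit_edges:
  assumes ne: "c \<noteq> []"
    and circ: "\<forall>j < length c. edge_dest a (c ! j) = fst (c ! ((j + 1) mod length c))"
  shows "c = edges a (fst (c!0)) (map snd c)"
proof -
  have fj: "j < length c \<Longrightarrow> fst (c!j) = fst (c!0) + sum_list (map a (take j (map snd c)))" for j
  proof (induction j)
    case 0 then show ?case by simp
  next
    case (Suc j)
    have "fst (c ! Suc j) = edge_dest a (c ! j)" using circ Suc.prems by simp
    also have "\<dots> = fst (c!j) + a (snd (c!j))" by (simp add: edge_dest_def)
    also have "\<dots> = fst (c!0) + sum_list (map a (take (Suc j) (map snd c)))"
      using Suc by (simp add: take_Suc_conv_app_nth add.assoc)
    finally show ?case .
  qed
  show ?thesis unfolding edges_nth
    by (rule nth_equalityI) (auto simp: fj prod_eq_iff)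
qed

theorem mainTheorem3:
  fixes act :: "int ^ 'n \<Rightarrow> 'y::ab_group_add \<Rightarrow> 'y"
    and K :: nat and y :: "nat \<Rightarrow> 'y" and a :: "nat \<Rightarrow> int ^ 'n"
  assumes "laurent_module act"
    and "K \<ge> 1"
  shows "(\<exists>e. group \<lparr>carrier = gen_semigroup act {(y i, a i) | i. i \<in> {1..K}},
                       monoid.mult = sdp_mult act, one = e\<rparr>)
         \<longleftrightarrow> (\<exists>E. is_G_graph K E \<and> full_image K E \<and> eulerian a E \<and>
                  graph_elem act y a E = (0, 0))"
proof
  note m = assms(1)
  define S where "S = gen_semigroup act {(y i, a i) | i. i \<in> {1..K}}"
  assume "\<exists>e. group \<lparr>carrier = gen_semigroup act {(y i, a i) | i. i \<in> {1..K}},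
                       monoid.mult = sdp_mult act, one = e\<rparr>"
  then obtain e where gr: "group \<lparr>carrier = S, monoid.mult = sdp_mult act, one = e\<rparr>"
    unfolding S_def by blast
  interpret G: group "\<lparr>carrier = S, monoid.mult = sdp_mult act, one = e\<rparr>" by (rule gr)
  have eS: "e \<in> S" using G.one_closed by simp
  have "sdp_mult act e e = e" using G.l_one[of e] eS by simp
  hence e0: "e = (0,0)" using sdp_idem[OF m] by blast
  have "\<forall>i\<in>{1..K}. \<exists>w. w \<noteq> [] \<and> set w \<subseteq> {1..K} \<and> wprod act y a (i # w) = (0,0)"
  proof
    fix i assume i: "i \<in> {1..K}"
    have gi: "(y i, a i) \<in> S" unfolding S_def using i by (intro gen_semigroup.gen) auto
    then obtain z where z: "z \<in> S" "sdp_mult act (y i, a i) z = (0,0)"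
      using G.r_inv_ex[of "(y i, a i)"] e0 by auto
    then obtain w where "w \<noteq> []" "set w \<subseteq> {1..K}" "z = wprod act y a w"
      using gen_to_word[OF m] unfolding S_def by blast
    then show "\<exists>w. w \<noteq> [] \<and> set w \<subseteq> {1..K} \<and> wprod act y a (i # w) = (0,0)"
      using z by auto
  qed
  then obtain W where W: "\<And>i. i\<in>{1..K} \<Longrightarrow> W i \<noteq> [] \<and> set (W i) \<subseteq> {1..K} \<and>
      wprod act y a (i # W i) = (0,0)" by metis
  define ws where "ws = concat (map (\<lambda>i. i # W i) [1..<Suc K])"
  have w0: "wprod act y a ws = (0,0)" unfolding ws_def
    by (rule wprod_concat[OF m]) (use W in \<open>auto simp del: wprod.simps\<close>)
  have wsK: "set ws \<subseteq> {1..K}" unfolding ws_def using W by fastforce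
  have Kws: "{1..K} \<subseteq> set ws" unfolding ws_def by fastforce
  have wsne: "ws \<noteq> []" using Kws assms(2) by auto
  define E where "E = edges a 0 ws"
  have sE: "snd ` set E = set ws" unfolding E_def by (metis edges_snd list.set_map)
  have lenE: "length E = length ws" unfolding E_def by (metis edges_snd length_map)
  have sumws: "sum_list (map a ws) = 0" using w0 wprod_snd[of act y a ws] by simp
  have circ: "\<forall>j < length E. edge_dest a (E ! j) = fst (E ! ((j + 1) mod length E))"
  proof (intro allI impI)
    fix j assume j: "j < length E"
    have ed: "edge_dest a (E ! j) = sum_list (map a (take (Suc j) ws))"
      using j lenE unfolding E_def edges_nth edge_dest_def
      by (simp add: take_Suc_conv_app_nth)
    show "edge_dest a (E ! j) = fst (E ! ((j + 1) mod length E))"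
    proof (cases "Suc j < length E")
      case True
      then show ?thesis using ed lenE unfolding E_def edges_nth by simp
    next
      case False
      hence "Suc j = length ws" using j lenE by simp
      then show ?thesis using ed lenE sumws wsne unfolding E_def edges_nth by simp
    qed
  qed
  show "\<exists>E. is_G_graph K E \<and> full_image K E \<and> eulerian a E \<and> graph_elem act y a E = (0, 0)"
  proof (intro exI conjI)
    show "is_G_graph K E" unfolding is_G_graph_def using sE wsK by blast
    show "full_image K E" unfolding full_image_def using sE Kws by force
    show "eulerian a E" unfolding eulerian_def using circ lenE wsne by auto
    show "graph_elem act y a E = (0,0)" unfolding E_def
      using graph_elem_edges[OF m] w0 lm_zero[OF m] by simp
  qed
next
  note m = assms(1)
  define S where "S = gen_semigroup act {(y i, a i) | i. i \<in> {1..K}}"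
  assume "\<exists>E. is_G_graph K E \<and> full_image K E \<and> eulerian a E \<and> graph_elem act y a E = (0, 0)"
  then obtain E c where GG: "is_G_graph K E" and FI: "full_image K E" and ge: "graph_elem act y a E = (0,0)"
    and Ene: "E \<noteq> []" and mc: "mset c = mset E"
    and circ: "\<forall>j < length c. edge_dest a (c ! j) = fst (c ! ((j + 1) mod length c))"
    unfolding eulerian_def by blast
  have sc: "set c = set E" using mc by (metis set_mset_mset)
  have cne: "c \<noteq> []" using sc Ene by auto
  have perm: "sum_list (map f c) = sum_list (map f E)" for f :: "_ \<Rightarrow> 'z::comm_monoid_add"
    by (metis mc mset_map sum_mset_sum_list)
  have gc: "graph_elem act y a c = (0,0)" using ge
    perm[of "\<lambda>e. act (fst e) (y (snd e))"] perm[of "\<lambda>e. a (snd e)"]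
    unfolding graph_elem_def by simp
  define ws where "ws = map snd c"
  define p0 where "p0 = fst (c!0)"
  have "c = edges a p0 ws" unfolding ws_def p0_def by (rule circuit_edges[OF cne circ])
  hence "(act p0 (fst (wprod act y a ws)), snd (wprod act y a ws)) = (0,0)"
    using gc graph_elem_edges[OF m] by metis
  hence w0: "wprod act y a ws = (0,0)" using lm_inj[OF m] by (metis prod.collapse prod.inject)
  have wsne: "ws \<noteq> []" using cne ws_def by simp
  have sws: "set ws = snd ` set E" unfolding ws_def using sc by simp
  have wsK: "set ws \<subseteq> {1..K}" using GG sws unfolding is_G_graph_def by auto
  have Kws: "{1..K} \<subseteq> set ws" using FI sws unfolding full_image_def by force
  have oneS: "(0,0) \<in> S" unfolding S_def using word_to_gen[OF m wsne wsK, of y a] w0 by simp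
  have inv_gen: "\<exists>z\<in>S. sdp_mult act z (y i, a i) = (0,0)" if i: "i \<in> {1..K}" for i
  proof -
    obtain u v where uv: "ws = u @ i # v" using i Kws by (meson in_set_conv_decomp subsetD)
    have "sdp_mult act (wprod act y a u) (wprod act y a (i # v)) = (0,0)"
      using w0 uv wprod_append[OF m] by metis
    hence "sdp_mult act (wprod act y a (i # v)) (wprod act y a u) = (0,0)"
      by (rule sdp_comm_inv[OF m])
    hence "wprod act y a (i # (v @ u)) = (0,0)" using wprod_append[OF m, of y a "i # v" u] by simp
    hence h: "sdp_mult act (y i, a i) (wprod act y a (v @ u)) = (0,0)" by simp
    hence h2: "sdp_mult act (wprod act y a (v @ u)) (y i, a i) = (0,0)" by (rule sdp_comm_inv[OF m])
    show ?thesis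
    proof (cases "v @ u = []")
      case True
      hence g0: "(y i, a i) = (0,0)" using h sdp_one_r[OF m] by simp
      have "(y i, a i) \<in> S" unfolding S_def using i by (intro gen_semigroup.gen) auto
      then show ?thesis using g0 sdp_one_l[OF m] by (intro bexI[of _ "(y i, a i)"]) auto
    next
      case False
      have "set (v @ u) \<subseteq> {1..K}" using wsK uv by auto
      then have "wprod act y a (v @ u) \<in> S" unfolding S_def using word_to_gen[OF m False] by blast
      then show ?thesis using h2 by blast
    qed
  qed
  have linv: "x \<in> S \<Longrightarrow> \<exists>z\<in>S. sdp_mult act z x = (0,0)" for x
    unfolding S_def
  proof (induction rule: gen_semigroup.induct)
    case (gen g)
    then show ?case using inv_gen unfolding S_def by blast
  next
    case (mult g h)
    then obtain g' h' where "g' \<in> gen_semigroup act {(y i, a i) | i. i \<in> {1..K}}"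
      "h' \<in> gen_semigroup act {(y i, a i) | i. i \<in> {1..K}}"
      "sdp_mult act g' g = (0,0)" "sdp_mult act h' h = (0,0)" by blast
    moreover have "sdp_mult act (sdp_mult act h' g') (sdp_mult act g h) = (0,0)"
    proof -
      have "sdp_mult act (sdp_mult act h' g') (sdp_mult act g h)
          = sdp_mult act h' (sdp_mult act (sdp_mult act g' g) h)"
        by (simp add: sdp_assoc[OF m])
      also have "\<dots> = (0,0)" using \<open>sdp_mult act g' g = (0,0)\<close> \<open>sdp_mult act h' h = (0,0)\<close>
        by (simp add: sdp_one_l[OF m])
      finally show ?thesis .
    qed
    ultimately show ?case
      by (intro bexI[of _ "sdp_mult act h' g'"]) (auto intro: gen_semigroup.mult)
  qed
  have "group \<lparr>carrier = S, monoid.mult = sdp_mult act, one = (0,0)\<rparr>"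
  proof (rule groupI)
    show "x \<otimes>\<^bsub>\<lparr>carrier = S, monoid.mult = sdp_mult act, one = (0,0)\<rparr>\<^esub> y' \<in> carrier \<lparr>carrier = S, monoid.mult = sdp_mult act, one = (0,0)\<rparr>"
      if "x \<in> carrier \<lparr>carrier = S, monoid.mult = sdp_mult act, one = (0,0)\<rparr>"
         "y' \<in> carrier \<lparr>carrier = S, monoid.mult = sdp_mult act, one = (0,0)\<rparr>" for x y'
      using that unfolding S_def by (auto intro: gen_semigroup.mult)
  qed (auto simp: oneS sdp_assoc[OF m] sdp_one_l[OF m] linv)
  then show "\<exists>e. group \<lparr>carrier = gen_semigroup act {(y i, a i) | i. i \<in> {1..K}},
                       monoid.mult = sdp_mult act, one = e\<rparr>" unfolding S_def by blast
qed

end
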